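(* Consider the DSA algorithm described in the context, under conditions (a)–(c) on the weights and assuming every $f_{n,i}$ is differentiable and $\mu$-strongly convex with $L$-Lipschitz gradient. Let $q_{\min}:=\min_n q_n$ and $q_{\max}:=\max_n q_n$. Then for all $t>0$, $$\mathbb{E}\left[p^{t+1}\mid\mathcal{F}^t\right]\le\left[1-\frac1{q_{\max}}\right]p^t+\frac1{q_{\min}}\left[f(\mathbf{x}^t)-f(\mathbf{x}^* )-\nabla f(\mathbf{x}^* )^T(\mathbf{x}^t-\mathbf{x}^* )\right].$$
   Context: Problem: a connected network of $N$ nodes; node $n$ holds $q_n$ functions $f_{n,i}:\mathbb{R}^p\to\mathbb{R}$, each differentiable, $\mu$-strongly convex, with $L$-Lipschitz gradient; $f_n:=\frac1{q_n}\sum_i f_{n,i}$, $\tilde{\mathbf{x}}^*:=\arg\min_{\mathbf{x}}\sum_n f_n(\mathbf{x})$. For $\mathbf{x}=[\mathbf{x}_1;\dots;\mathbf{x}_N]\in\mathbb{R}^{Np}$, $f(\mathbf{x}):=\sum_n f_n(\mathbf{x}_n)$, $\mathbf{x}^*:=[\tilde{\mathbf{x}}^*;\dots;\tilde{\mathbf{x}}^*]$. Weights: $\mathbf{W},\tilde{\mathbf{W}}\in\mathbb{R}^{N\times N}$ with entries nonzero only for $m=n$ or $m$ a neighbor of $n$, satisfying (a) symmetry; (b) $\mathrm{null}(\mathbf{I}-\tilde{\mathbf{W}})\supseteq\mathrm{span}(\mathbf{1})$, $\mathrm{null}(\mathbf{I}-\mathbf{W})=\mathrm{span}(\mathbf{1})$,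 $\mathrm{null}(\tilde{\mathbf{W}}-\mathbf{W})=\mathrm{span}(\mathbf{1})$; (c) $\mathbf{W}\preceq\tilde{\mathbf{W}}\preceq(\mathbf{I}+\mathbf{W})/2$, $\tilde{\mathbf{W}}\succ0$. $\mathbf{Z}:=\mathbf{W}\otimes\mathbf{I}_p$, $\tilde{\mathbf{Z}}:=\tilde{\mathbf{W}}\otimes\mathbf{I}_p$. DSA: stepsize $\alpha>0$, initial $\mathbf{x}_n^0$, $\mathbf{y}_{n,i}^0=\mathbf{x}_n^0$. At each $t\ge0$ node $n$ draws $i_n^t$ uniformly from $\{1,\dots,q_n\}$ independently of the past, sets $\hat{\mathbf{g}}_n^t:=\nabla f_{n,i_n^t}(\mathbf{x}_n^t)-\nabla f_{n,i_n^t}(\mathbf{y}_{n,i_n^t}^t)+\frac1{q_n}\sum_{i}\nabla f_{n,i}(\mathbf{y}_{n,i}^t)$, and $\mathbf{y}_{n,i}^{t+1}=\mathbf{x}_n^t$ if $i=i_n^t$, else $\mathbf{y}_{n,i}^{t+1}=\mathbf{y}_{n,i}^t$. With $\hat{\mathbf{g}}^t:=[\hat{\mathbf{g}}_1^t;\dots;\hat{\mathbf{g}}_N^t]$: $\mathbf{x}^1=\mathbf{Z}\mathbf{x}^0-\alpha\hat{\mathbf{g}}^0$, $\mathbf{x}^{t+1}=(\mathbf{I}+\mathbf{Z})\mathbf{x}^t-\tilde{\mathbf{Z}}\mathbf{x}^{t-1}-\alpha[\hat{\mathbf{g}}^t-\hat{\mathbf{g}}^{t-1}]$ for $t\ge1$.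 $\mathcal{F}^t$ is the sigma-algebra of the history up to time $t$. Define $$p^t:=\sum_{n=1}^N\frac1{q_n}\sum_{i=1}^{q_n}\left(f_{n,i}(\mathbf{y}_{n,i}^t)-f_{n,i}(\tilde{\mathbf{x}}^* )-\nabla f_{n,i}(\tilde{\mathbf{x}}^* )^T(\mathbf{y}_{n,i}^t-\tilde{\mathbf{x}}^* )\right).$$ *)

theory Defs
  imports "HOL-Analysis.Analysis" "HOL-Probability.Probability"
begin

definition strongly_convex_on :: "'a::real_normed_vector set \<Rightarrow> real \<Rightarrow> ('a \<Rightarrow> real) \<Rightarrow> bool" where
  "strongly_convex_on S mu f \<longleftrightarrow>
     (\<forall>x\<in>S. \<forall>y\<in>S. \<forall>u::real. 0 \<le> u \<and> u \<le> 1 \<longrightarrow>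
        f (u *\<^sub>R x + (1 - u) *\<^sub>R y) \<le> u * f x + (1 - u) * f y - mu / 2 * u * (1 - u) * (norm (x - y))\<^sup>2)"

text \<open>Nodes are 0..N-1; the local component functions at node n are indexed 0..q n - 1.
  Network vectors in R^{Np} are functions nat => 'v (only indices < N matter).
  Kronecker product (W tensor I_p) applied to a network vector.\<close>
definition kron_apply :: "nat \<Rightarrow> (nat \<Rightarrow> nat \<Rightarrow> real) \<Rightarrow> (nat \<Rightarrow> 'v::real_vector) \<Rightarrow> nat \<Rightarrow> 'v" where
  "kron_apply N W x = (\<lambda>n. \<Sum>m<N. W n m *\<^sub>R x m)"

definition dsa_ghat :: "(nat \<Rightarrow> nat) \<Rightarrow> (nat \<Rightarrow> nat \<Rightarrow> 'v \<Rightarrow> 'v::real_vector)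
    \<Rightarrow> (nat \<Rightarrow> 'v) \<Rightarrow> (nat \<Rightarrow> nat \<Rightarrow> 'v) \<Rightarrow> (nat \<Rightarrow> nat) \<Rightarrow> nat \<Rightarrow> 'v" where
  "dsa_ghat q g x y i = (\<lambda>n. g n (i n) (x n) - g n (i n) (y n (i n))
        + (1 / real (q n)) *\<^sub>R (\<Sum>j<q n. g n j (y n j)))"

definition dsa_yupd :: "(nat \<Rightarrow> 'v) \<Rightarrow> (nat \<Rightarrow> nat \<Rightarrow> 'v) \<Rightarrow> (nat \<Rightarrow> nat) \<Rightarrow> nat \<Rightarrow> nat \<Rightarrow> 'v" where
  "dsa_yupd x y i = (\<lambda>n j. if j = i n then x n else y n j)"

text \<open>dsa_state ... om t = (x^t, y^t, x^{t+1}, y^{t+1}) along the sample path om,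
  where om t n is the index i_n^t drawn by node n at time t.\<close>
fun dsa_state :: "nat \<Rightarrow> (nat \<Rightarrow> nat) \<Rightarrow> (nat \<Rightarrow> nat \<Rightarrow> 'v \<Rightarrow> 'v::real_vector)
    \<Rightarrow> (nat \<Rightarrow> nat \<Rightarrow> real) \<Rightarrow> (nat \<Rightarrow> nat \<Rightarrow> real) \<Rightarrow> real \<Rightarrow> (nat \<Rightarrow> 'v)
    \<Rightarrow> (nat \<Rightarrow> nat \<Rightarrow> nat) \<Rightarrow> nat
    \<Rightarrow> (nat \<Rightarrow> 'v) \<times> (nat \<Rightarrow> nat \<Rightarrow> 'v) \<times> (nat \<Rightarrow> 'v) \<times> (nat \<Rightarrow> nat \<Rightarrow> 'v)" where
  "dsa_state N q g W Wt \<alpha> x0 om 0 =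
     (let y0 = (\<lambda>n j. x0 n);
          x1 = (\<lambda>n. kron_apply N W x0 n - \<alpha> *\<^sub>R dsa_ghat q g x0 y0 (om 0) n);
          y1 = dsa_yupd x0 y0 (om 0)
      in (x0, y0, x1, y1))"
| "dsa_state N q g W Wt \<alpha> x0 om (Suc t) =
     (let (xp, yp, x, y) = dsa_state N q g W Wt \<alpha> x0 om t;
          gp = dsa_ghat q g xp yp (om t);
          gc = dsa_ghat q g x y (om (Suc t));
          xn = (\<lambda>n. x n + kron_apply N W x n - kron_apply N Wt xp n - \<alpha> *\<^sub>R (gc n - gp n));
          yn = dsa_yupd x y (om (Suc t))
      in (x, y, xn, yn))"

definition dsa_x where
  "dsa_x N q g W Wt \<alpha> x0 om t = fst (dsa_state N q g W Wt \<alpha> x0 om t)"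

definition dsa_y where
  "dsa_y N q g W Wt \<alpha> x0 om t = fst (snd (dsa_state N q g W Wt \<alpha> x0 om t))"

definition dsa_p :: "nat \<Rightarrow> (nat \<Rightarrow> nat) \<Rightarrow> (nat \<Rightarrow> nat \<Rightarrow> 'v \<Rightarrow> real) \<Rightarrow> (nat \<Rightarrow> nat \<Rightarrow> 'v \<Rightarrow> 'v::real_inner)
    \<Rightarrow> 'v \<Rightarrow> (nat \<Rightarrow> nat \<Rightarrow> 'v) \<Rightarrow> real" where
  "dsa_p N q f g xs y = (\<Sum>n<N. (1 / real (q n)) *
      (\<Sum>i<q n. f n i (y n i) - f n i xs - inner (g n i xs) (y n i - xs)))"

definition loc_f :: "(nat \<Rightarrow> nat) \<Rightarrow> (nat \<Rightarrow> nat \<Rightarrow> 'v \<Rightarrow> real) \<Rightarrow> nat \<Rightarrow> 'v \<Rightarrow> real" where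
  "loc_f q f n z = (1 / real (q n)) * (\<Sum>i<q n. f n i z)"

definition loc_grad :: "(nat \<Rightarrow> nat) \<Rightarrow> (nat \<Rightarrow> nat \<Rightarrow> 'v \<Rightarrow> 'v::real_vector) \<Rightarrow> nat \<Rightarrow> 'v \<Rightarrow> 'v" where
  "loc_grad q g n z = (1 / real (q n)) *\<^sub>R (\<Sum>i<q n. g n i z)"

definition qform :: "nat \<Rightarrow> (nat \<Rightarrow> nat \<Rightarrow> real) \<Rightarrow> (nat \<Rightarrow> real) \<Rightarrow> real" where
  "qform N A v = (\<Sum>m<N. \<Sum>n<N. v m * A m n * v n)"

definition null_space :: "nat \<Rightarrow> (nat \<Rightarrow> nat \<Rightarrow> real) \<Rightarrow> (nat \<Rightarrow> real) set" where
  "null_space N A = {v. (\<forall>k\<ge>N. v k = 0) \<and> (\<forall>m<N. (\<Sum>n<N. A m n * v n) = 0)}"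

definition span_ones :: "nat \<Rightarrow> (nat \<Rightarrow> real) set" where
  "span_ones N = {v. \<exists>c. \<forall>k. v k = (if k < N then c else 0)}"

definition idm :: "nat \<Rightarrow> nat \<Rightarrow> real" where
  "idm m n = (if m = n then 1 else 0)"

end

theory Submission
  imports Defs
begin

lemma tangent:
  fixes f :: "'v::real_inner \<Rightarrow> real"
  assumes sc: "strongly_convex_on UNIV mu f" and mu: "mu > 0"
    and d: "\<And>x. (f has_derivative (\<lambda>h. inner (G x) h)) (at x)"
  shows "f z - f xs - inner (G xs) (z - xs) \<ge> 0"
proof -
  define h where "h u = f (xs + u *\<^sub>R (z - xs))" for u :: real
  have cv: "convex_on UNIV h"
  proof (rule convex_onI)
    fix t a b :: real assume t: "0 < t" "t < 1"
    have eq: "xs + ((1 - t) * a + t * b) *\<^sub>R (z - xs) = t *\<^sub>R (xs + b *\<^sub>R (z - xs)) + (1 - t) *\<^sub>R (xs + a *\<^sub>R (z - xs))"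
      by (simp add: algebra_simps)
    have "f (t *\<^sub>R (xs + b *\<^sub>R (z - xs)) + (1 - t) *\<^sub>R (xs + a *\<^sub>R (z - xs)))
       \<le> t * h b + (1 - t) * h a - mu / 2 * t * (1 - t) * (norm ((xs + b *\<^sub>R (z - xs)) - (xs + a *\<^sub>R (z - xs))))\<^sup>2"
      using sc t unfolding strongly_convex_on_def h_def
      by (metis (no_types, lifting) UNIV_I less_eq_real_def)
    also have "\<dots> \<le> t * h b + (1 - t) * h a"
      using mu t by (simp add: mult_nonneg_nonneg)
    finally show "h ((1 - t) *\<^sub>R a + t *\<^sub>R b) \<le> (1 - t) * h a + t * h b"
      unfolding h_def by (simp add: eq algebra_simps)
  qed simp
  have hd: "(h has_field_derivative inner (G xs) (z - xs)) (at 0)"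
  proof -
    have l: "((\<lambda>u::real. xs + u *\<^sub>R (z - xs)) has_derivative (\<lambda>u. u *\<^sub>R (z - xs))) (at 0)"
      by (auto intro!: derivative_eq_intros)
    have "(h has_derivative (\<lambda>u. inner (G xs) (u *\<^sub>R (z - xs)))) (at 0)"
    proof -
      have "((\<lambda>u. f (xs + u *\<^sub>R (z - xs))) has_derivative (\<lambda>u. inner (G xs) (u *\<^sub>R (z - xs)))) (at 0)"
        using has_derivative_compose[OF l, of f "\<lambda>h. inner (G xs) h"] d[of xs] by simp
      then show ?thesis unfolding h_def .
    qed
    then show ?thesis
      unfolding has_field_derivative_def by (simp add: mult.commute[of _ "inner (G xs) (z - xs)"])
  qed
  have "h 1 - h 0 \<ge> inner (G xs) (z - xs) * (1 - 0)"
    by (rule convex_on_imp_above_tangent[OF cv]) (use hd in auto)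
  then show ?thesis by (simp add: h_def)
qed

lemma state_dep:
  "(\<forall>s\<le>t. om s = om' s) \<Longrightarrow> dsa_state N q g W Wt \<alpha> x0 om t = dsa_state N q g W Wt \<alpha> x0 om' t"
proof (induction t)
  case 0 then show ?case by simp
next
  case (Suc t)
  then have "dsa_state N q g W Wt \<alpha> x0 om t = dsa_state N q g W Wt \<alpha> x0 om' t" by simp
  moreover have "om t = om' t" "om (Suc t) = om' (Suc t)" using Suc.prems by auto
  ultimately show ?case by (simp only: dsa_state.simps)
qed

lemma y_next:
  assumes "t > 0"
  shows "dsa_y N q g W Wt \<alpha> x0 (om(t := i)) (Suc t)
     = dsa_yupd (dsa_x N q g W Wt \<alpha> x0 om t) (dsa_y N q g W Wt \<alpha> x0 om t) i"
proof -
  obtain t' where t: "t = Suc t'" using assms by (cases t) auto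
  have e: "dsa_state N q g W Wt \<alpha> x0 (om(Suc t' := i)) t' = dsa_state N q g W Wt \<alpha> x0 om t'"
    by (rule state_dep) (auto simp: t)
  obtain a b c d where abcd: "dsa_state N q g W Wt \<alpha> x0 om t' = (a, b, c, d)" by (cases "dsa_state N q g W Wt \<alpha> x0 om t'") auto
  show ?thesis unfolding dsa_y_def dsa_x_def t
    by (simp add: e abcd Let_def t)
qed

lemma exp_lemma:
  fixes phi :: "nat \<Rightarrow> nat \<Rightarrow> 'v \<Rightarrow> real"
  assumes q: "\<forall>n<N. q n \<ge> 1"
  shows "measure_pmf.expectation (Pi_pmf {..<N} 0 (\<lambda>n. pmf_of_set {..<q n}))
     (\<lambda>i. \<Sum>n<N. 1 / real (q n) * (\<Sum>j<q n. phi n j (dsa_yupd X Y i n j)))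
   = (\<Sum>n<N. 1 / real (q n) * (\<Sum>j<q n. (phi n j (X n) + (real (q n) - 1) * phi n j (Y n j)) / real (q n)))"
proof -
  let ?P = "Pi_pmf {..<N} 0 (\<lambda>n. pmf_of_set {..<q n})"
  have fin: "finite (set_pmf ?P)"
  proof -
    have "finite (PiE_dflt {..<N} 0 (set_pmf \<circ> (\<lambda>n. pmf_of_set {..<q n})))"
    proof (rule finite_PiE_dflt)
      fix x assume "x \<in> {..<N}"
      then have "0 < q x" using q by (simp add: Suc_le_eq)
      then have "{..<q x} \<noteq> {}" by auto
      then show "finite ((set_pmf \<circ> (\<lambda>n. pmf_of_set {..<q n})) x)" by simp
    qed simp
    then show ?thesis by (subst set_Pi_pmf) auto
  qed
  have int: "\<And>h::(nat \<Rightarrow> nat) \<Rightarrow> real. integrable (measure_pmf ?P) h"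
    by (rule integrable_measure_pmf_finite[OF fin])
  have comp: "measure_pmf.expectation ?P (\<lambda>i. phi n j (dsa_yupd X Y i n j))
      = (phi n j (X n) + (real (q n) - 1) * phi n j (Y n j)) / real (q n)"
    if n: "n < N" and j: "j < q n" for n j
  proof -
    have "measure_pmf.expectation ?P (\<lambda>i. phi n j (dsa_yupd X Y i n j))
        = measure_pmf.expectation (map_pmf (\<lambda>i. i n) ?P) (\<lambda>k. phi n j (if j = k then X n else Y n j))"
      by (simp add: dsa_yupd_def)
    also have "map_pmf (\<lambda>i. i n) ?P = pmf_of_set {..<q n}"
      using n by (subst Pi_pmf_component) auto
    also have "measure_pmf.expectation (pmf_of_set {..<q n}) (\<lambda>k. phi n j (if j = k then X n else Y n j))
        = (\<Sum>k<q n. phi n j (if j = k then X n else Y n j)) / real (q n)"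
      using j by (subst integral_pmf_of_set) auto
    also have "(\<Sum>k<q n. phi n j (if j = k then X n else Y n j)) = (\<Sum>k<q n. (if k = j then phi n j (X n) else phi n j (Y n j)))"
      by (rule sum.cong) auto
    also have "\<dots> = phi n j (X n) + (real (q n) - 1) * phi n j (Y n j)"
    proof -
      have "(\<Sum>k<q n. (if k = j then phi n j (X n) else phi n j (Y n j)))
          = (\<Sum>k<q n. (if k = j then phi n j (X n) - phi n j (Y n j) else 0) + phi n j (Y n j))"
        by (rule sum.cong) auto
      also have "\<dots> = phi n j (X n) - phi n j (Y n j) + real (q n) * phi n j (Y n j)"
        using j by (simp add: sum.distrib)
      finally show ?thesis by (simp add: algebra_simps)
    qed
    finally show ?thesis .
  qed
  have "measure_pmf.expectation ?P
     (\<lambda>i. \<Sum>n<N. 1 / real (q n) * (\<Sum>j<q n. phi n j (dsa_yupd X Y i n j)))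
     = (\<Sum>n<N. measure_pmf.expectation ?P (\<lambda>i. 1 / real (q n) * (\<Sum>j<q n. phi n j (dsa_yupd X Y i n j))))"
    by (rule Bochner_Integration.integral_sum) (rule int)
  also have "\<dots> = (\<Sum>n<N. 1 / real (q n) * (\<Sum>j<q n. measure_pmf.expectation ?P (\<lambda>i. phi n j (dsa_yupd X Y i n j))))"
  proof (rule sum.cong[OF refl])
    fix n
    show "measure_pmf.expectation ?P (\<lambda>i. 1 / real (q n) * (\<Sum>j<q n. phi n j (dsa_yupd X Y i n j)))
      = 1 / real (q n) * (\<Sum>j<q n. measure_pmf.expectation ?P (\<lambda>i. phi n j (dsa_yupd X Y i n j)))"
      by (subst Bochner_Integration.integral_mult_right_zero, subst Bochner_Integration.integral_sum, rule int, rule refl)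
  qed
  also have "\<dots> = (\<Sum>n<N. 1 / real (q n) * (\<Sum>j<q n. (phi n j (X n) + (real (q n) - 1) * phi n j (Y n j)) / real (q n)))"
    by (intro sum.cong refl arg_cong2[where f="(*)"]) (simp add: comp)
  finally show ?thesis .
qed

lemma scalar_ineq:
  fixes m Q M A B :: real
  assumes "1 \<le> m" "m \<le> Q" "Q \<le> M" "0 \<le> A" "0 \<le> B"
  shows "1 / Q * ((A + (Q - 1) * B) / Q) \<le> (1 - 1 / M) * (1 / Q * B) + 1 / m * (1 / Q * A)"
proof -
  have e: "1 / Q * ((A + (Q - 1) * B) / Q) = (1 / Q) * (A / Q) + (1 - 1 / Q) * (B / Q)"
    using assms by (simp add: field_simps)
  have i1: "1 / Q \<le> 1 / m" using assms by (intro divide_left_mono) auto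
  have i2: "1 - 1 / Q \<le> 1 - 1 / M" using assms by (simp add: frac_le)
  have "(1 / Q) * (A / Q) \<le> (1 / m) * (A / Q)"
    using assms i1 by (intro mult_right_mono) auto
  moreover have "(1 - 1 / Q) * (B / Q) \<le> (1 - 1 / M) * (B / Q)"
    using assms i2 by (intro mult_right_mono) auto
  ultimately show ?thesis unfolding e by (simp add: field_simps)
qed
theorem lemma5:
  fixes N :: nat and q :: "nat \<Rightarrow> nat"
    and adj :: "nat \<Rightarrow> nat \<Rightarrow> bool"
    and f :: "nat \<Rightarrow> nat \<Rightarrow> 'v::euclidean_space \<Rightarrow> real"
    and g :: "nat \<Rightarrow> nat \<Rightarrow> 'v \<Rightarrow> 'v"
    and mu L \<alpha> :: real
    and W Wt :: "nat \<Rightarrow> nat \<Rightarrow> real"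
    and x0 :: "nat \<Rightarrow> 'v" and xs :: 'v
    and om :: "nat \<Rightarrow> nat \<Rightarrow> nat" and t :: nat
  assumes N_pos: "N \<ge> 1"
    and q_pos: "\<forall>n<N. q n \<ge> 1"
    and adj_sym: "\<forall>m n. adj m n \<longleftrightarrow> adj n m"
    and adj_irrefl: "\<forall>n. \<not> adj n n"
    and adj_nodes: "\<forall>m n. adj m n \<longrightarrow> m < N \<and> n < N"
    and connected: "\<forall>m<N. \<forall>n<N. adj\<^sup>*\<^sup>* m n"
    and mu_pos: "mu > 0" and L_pos: "L > 0"
    and grad: "\<forall>n<N. \<forall>i<q n. \<forall>x. (f n i has_derivative (\<lambda>h. inner (g n i x) h)) (at x)"
    and sconv: "\<forall>n<N. \<forall>i<q n. strongly_convex_on UNIV mu (f n i)"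
    and lips: "\<forall>n<N. \<forall>i<q n. L-lipschitz_on UNIV (g n i)"
    and xs_min: "\<forall>z. (\<Sum>n<N. loc_f q f n xs) \<le> (\<Sum>n<N. loc_f q f n z)"
    and W_supp: "\<forall>m<N. \<forall>n<N. m \<noteq> n \<and> \<not> adj n m \<longrightarrow> W n m = 0"
    and Wt_supp: "\<forall>m<N. \<forall>n<N. m \<noteq> n \<and> \<not> adj n m \<longrightarrow> Wt n m = 0"
    and W_sym: "\<forall>m<N. \<forall>n<N. W m n = W n m"
    and Wt_sym: "\<forall>m<N. \<forall>n<N. Wt m n = Wt n m"
    and null_IWt: "span_ones N \<subseteq> null_space N (\<lambda>m n. idm m n - Wt m n)"
    and null_IW: "null_space N (\<lambda>m n. idm m n - W m n) = span_ones N"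
    and null_WtW: "null_space N (\<lambda>m n. Wt m n - W m n) = span_ones N"
    and W_le_Wt: "\<forall>v. qform N W v \<le> qform N Wt v"
    and Wt_le: "\<forall>v. qform N Wt v \<le> qform N (\<lambda>m n. (idm m n + W m n) / 2) v"
    and Wt_pd: "\<forall>v. (\<exists>k<N. v k \<noteq> 0) \<longrightarrow> qform N Wt v > 0"
    and alpha_pos: "\<alpha> > 0"
    and om_valid: "\<forall>s. \<forall>n<N. om s n < q n"
    and t_pos: "t > 0"
  shows "measure_pmf.expectation (Pi_pmf {..<N} 0 (\<lambda>n. pmf_of_set {..<q n}))
           (\<lambda>i. dsa_p N q f g xs (dsa_y N q g W Wt \<alpha> x0 (om(t := i)) (Suc t)))
         \<le> (1 - 1 / real (Max (q ` {..<N}))) * dsa_p N q f g xs (dsa_y N q g W Wt \<alpha> x0 om t)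
           + (1 / real (Min (q ` {..<N}))) *
             (\<Sum>n<N. loc_f q f n (dsa_x N q g W Wt \<alpha> x0 om t n) - loc_f q f n xs
                 - inner (loc_grad q g n xs) (dsa_x N q g W Wt \<alpha> x0 om t n - xs))"
proof -
  define X where "X = dsa_x N q g W Wt \<alpha> x0 om t"
  define Y where "Y = dsa_y N q g W Wt \<alpha> x0 om t"
  define phi where "phi n j z = f n j z - f n j xs - inner (g n j xs) (z - xs)" for n j z
  define M where "M = real (Max (q ` {..<N}))"
  define m where "m = real (Min (q ` {..<N}))"
  have pdef: "\<And>y. dsa_p N q f g xs y = (\<Sum>n<N. 1 / real (q n) * (\<Sum>j<q n. phi n j (y n j)))"
    unfolding dsa_p_def phi_def by simp
  have phi_nn: "\<And>n j z. n < N \<Longrightarrow> j < q n \<Longrightarrow> phi n j z \<ge> 0"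
    unfolding phi_def using sconv grad mu_pos by (intro tangent[where mu=mu]) auto
  have loc: "loc_f q f n (X n) - loc_f q f n xs - inner (loc_grad q g n xs) (X n - xs)
      = 1 / real (q n) * (\<Sum>j<q n. phi n j (X n))" for n
    unfolding loc_f_def loc_grad_def phi_def
    by (simp add: sum_subtractf inner_sum_left right_diff_distrib)
  have E: "measure_pmf.expectation (Pi_pmf {..<N} 0 (\<lambda>n. pmf_of_set {..<q n}))
           (\<lambda>i. dsa_p N q f g xs (dsa_y N q g W Wt \<alpha> x0 (om(t := i)) (Suc t)))
      = (\<Sum>n<N. 1 / real (q n) * (\<Sum>j<q n. (phi n j (X n) + (real (q n) - 1) * phi n j (Y n j)) / real (q n)))"
    unfolding pdef y_next[OF t_pos] X_def[symmetric] Y_def[symmetric]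
    by (rule exp_lemma[OF q_pos])
  have ne: "q ` {..<N} \<noteq> {}" using N_pos by (auto simp: lessThan_empty_iff)
  have bnd: "1 \<le> m \<and> m \<le> real (q n) \<and> real (q n) \<le> M" if "n < N" for n
  proof -
    have "Min (q ` {..<N}) \<in> q ` {..<N}" using ne by (intro Min_in) auto
    then have "1 \<le> Min (q ` {..<N})" using q_pos by auto
    moreover have "Min (q ` {..<N}) \<le> q n" using that by (intro Min_le) auto
    moreover have "q n \<le> Max (q ` {..<N})" using that by (intro Max_ge) auto
    ultimately show ?thesis unfolding m_def M_def by simp
  qed
  have "(\<Sum>n<N. 1 / real (q n) * (\<Sum>j<q n. (phi n j (X n) + (real (q n) - 1) * phi n j (Y n j)) / real (q n)))
      \<le> (\<Sum>n<N. (1 - 1 / M) * (1 / real (q n) * (\<Sum>j<q n. phi n j (Y n j)))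
                  + 1 / m * (1 / real (q n) * (\<Sum>j<q n. phi n j (X n))))"
  proof (rule sum_mono)
    fix n assume n: "n \<in> {..<N}"
    have s: "(\<Sum>j<q n. (phi n j (X n) + (real (q n) - 1) * phi n j (Y n j)) / real (q n))
      = ((\<Sum>j<q n. phi n j (X n)) + (real (q n) - 1) * (\<Sum>j<q n. phi n j (Y n j))) / real (q n)"
      by (simp add: sum_divide_distrib[symmetric] sum.distrib sum_distrib_left)
    show "1 / real (q n) * (\<Sum>j<q n. (phi n j (X n) + (real (q n) - 1) * phi n j (Y n j)) / real (q n))
      \<le> (1 - 1 / M) * (1 / real (q n) * (\<Sum>j<q n. phi n j (Y n j)))
                  + 1 / m * (1 / real (q n) * (\<Sum>j<q n. phi n j (X n)))"
      unfolding s using bnd[of n] n phi_nn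
      by (intro scalar_ineq) (auto intro!: sum_nonneg)
  qed
  also have "\<dots> = (1 - 1 / M) * dsa_p N q f g xs Y
      + 1 / m * (\<Sum>n<N. loc_f q f n (X n) - loc_f q f n xs - inner (loc_grad q g n xs) (X n - xs))"
    unfolding pdef loc by (simp add: sum.distrib sum_distrib_left)
  finally show ?thesis unfolding E X_def Y_def M_def m_def .
qed
end
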